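(* Let $S$ be a finite set of red and blue points in the plane in general position, containing at least one point of each color. Then every minimum bichromatic spanning tree of $S$ is quasi-plane, i.e., it does not contain three edges that pairwise cross.
   Context: A set of points is in general position if no three of them are collinear. A bichromatic spanning tree of a set $S$ of red and blue points is a spanning tree on vertex set $S$, drawn with straight-line segment edges, in which every edge has one red and one blue endpoint. A minimum bichromatic spanning tree (MinBST) is a bichromatic spanning tree of minimum total Euclidean edge length. Two edges (segments) cross if they share a point that is interior to both segments. A straight-line drawing is quasi-plane if no three of its edges pairwise cross. *)

theory Defs
  imports "HOL-Analysis.Analysis"
begin

type_synonym point = "real^2"

text \<open>A bichromatic edge is represented as a
pair (r, b) with r red and b blue, drawn as the straight segment from r to b.\<close>

definition general_position :: "point set \<Rightarrow> bool" where
  "general_position S \<longleftrightarrow>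
     (\<forall>a\<in>S. \<forall>b\<in>S. \<forall>c\<in>S. a \<noteq> b \<and> a \<noteq> c \<and> b \<noteq> c \<longrightarrow> \<not> collinear {a, b, c})"

definition adj :: "(point \<times> point) set \<Rightarrow> point \<Rightarrow> point \<Rightarrow> bool" where
  "adj T u v \<longleftrightarrow> (u, v) \<in> T \<or> (v, u) \<in> T"

definition graph_connected :: "point set \<Rightarrow> (point \<times> point) set \<Rightarrow> bool" where
  "graph_connected V T \<longleftrightarrow> (\<forall>u\<in>V. \<forall>v\<in>V. (u, v) \<in> {(x, y). adj T x y}\<^sup>*)"

definition has_cycle :: "(point \<times> point) set \<Rightarrow> bool" where
  "has_cycle T \<longleftrightarrow> (\<exists>vs. length vs \<ge> 3 \<and> distinct vs \<and>
      (\<forall>i < length vs. adj T (vs ! i) (vs ! ((i + 1) mod length vs))))"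

definition bichromatic_spanning_tree ::
  "point set \<Rightarrow> point set \<Rightarrow> (point \<times> point) set \<Rightarrow> bool" where
  "bichromatic_spanning_tree R B T \<longleftrightarrow>
     T \<subseteq> R \<times> B \<and> graph_connected (R \<union> B) T \<and> \<not> has_cycle T"

definition tree_length :: "(point \<times> point) set \<Rightarrow> real" where
  "tree_length T = (\<Sum>(r, b)\<in>T. dist r b)"

definition min_bichromatic_spanning_tree ::
  "point set \<Rightarrow> point set \<Rightarrow> (point \<times> point) set \<Rightarrow> bool" where
  "min_bichromatic_spanning_tree R B T \<longleftrightarrow>
     bichromatic_spanning_tree R B T \<and>
     (\<forall>T'. bichromatic_spanning_tree R B T' \<longrightarrow> tree_length T \<le> tree_length T')"

definition edges_cross :: "point \<times> point \<Rightarrow> point \<times> point \<Rightarrow> bool" where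
  "edges_cross e f \<longleftrightarrow>
     open_segment (fst e) (snd e) \<inter> open_segment (fst f) (snd f) \<noteq> {}"

definition quasi_plane :: "(point \<times> point) set \<Rightarrow> bool" where
  "quasi_plane T \<longleftrightarrow> \<not> (\<exists>e1\<in>T. \<exists>e2\<in>T. \<exists>e3\<in>T. e1 \<noteq> e2 \<and> e1 \<noteq> e3 \<and> e2 \<noteq> e3 \<and>
      edges_cross e1 e2 \<and> edges_cross e1 e3 \<and> edges_cross e2 e3)"

end

theory Submission
  imports Defs "HOL-Library.Transitive_Closure_Table"
begin


definition conn :: "(point \<times> point) set \<Rightarrow> point \<Rightarrow> point \<Rightarrow> bool" where
  "conn G u v \<longleftrightarrow> (u, v) \<in> {(x, y). adj G x y}\<^sup>*"

lemma adj_sym: "adj G x y = adj G y x" by (auto simp: adj_def)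

lemma conn_refl[simp]: "conn G u u" by (simp add: conn_def)

lemma conn_edge: "adj G u v \<Longrightarrow> conn G u v"
  unfolding conn_def by (rule r_into_rtrancl) simp

lemma conn_trans: "conn G u v \<Longrightarrow> conn G v w \<Longrightarrow> conn G u w"
  unfolding conn_def by (rule rtrancl_trans)

lemma conn_sym: assumes "conn G u v" shows "conn G v u"
proof -
  have "(u, v) \<in> {(x, y). adj G x y}\<^sup>*" using assms by (simp add: conn_def)
  then have "(v, u) \<in> {(x, y). adj G x y}\<^sup>*"
  proof (induction rule: rtrancl_induct)
    case base then show ?case by simp
  next
    case (step y z)
    then have "(z, y) \<in> {(x, y). adj G x y}" by (simp add: adj_sym)
    then show ?case using step.IH by (rule converse_rtrancl_into_rtrancl)
  qed
  then show ?thesis by (simp add: conn_def)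
qed

lemma adj_mono: "G \<subseteq> H \<Longrightarrow> adj G x y \<Longrightarrow> adj H x y" by (auto simp: adj_def)

lemma conn_mono: assumes "G \<subseteq> H" "conn G u v" shows "conn H u v"
proof -
  have "(u, v) \<in> {(x, y). adj G x y}\<^sup>*" using assms by (simp add: conn_def)
  then have "(u, v) \<in> {(x, y). adj H x y}\<^sup>*"
    by (rule rtrancl_mono[THEN subsetD, rotated]) (use assms(1) adj_mono in blast)
  then show ?thesis by (simp add: conn_def)
qed

lemma conn_avoid_suffix:
  assumes "conn G u w"
  shows "conn (G - {g}) u w \<or> conn (G - {g}) (fst g) w \<or> conn (G - {g}) (snd g) w"
proof -
  have "(u, w) \<in> {(x, y). adj G x y}\<^sup>*" using assms by (simp add: conn_def)
  then show ?thesis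
  proof (induction rule: rtrancl_induct)
    case base then show ?case by simp
  next
    case (step y z)
    then have a: "adj G y z" by simp
    show ?case
    proof (cases "adj (G - {g}) y z")
      case True
      then have "conn (G - {g}) y z" by (rule conn_edge)
      then show ?thesis using step.IH conn_trans by blast
    next
      case False
      with a have "z = fst g \<or> z = snd g" by (auto simp: adj_def)
      then show ?thesis by auto
    qed
  qed
qed

lemma conn_avoid_prefix:
  assumes "conn G u w"
  shows "conn (G - {g}) u w \<or> conn (G - {g}) u (fst g) \<or> conn (G - {g}) u (snd g)"
  using conn_avoid_suffix[OF conn_sym[OF assms], of g] conn_sym by blast

lemma has_cycle_mono: "G \<subseteq> H \<Longrightarrow> has_cycle G \<Longrightarrow> has_cycle H"
  unfolding has_cycle_def using adj_mono by blast

lemma rel_to_p: "(a, b) \<in> {(x, y). P x y}\<^sup>* \<Longrightarrow> P\<^sup>*\<^sup>* a b"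
  by (induction rule: rtrancl_induct) (auto intro: rtranclp.rtrancl_into_rtrancl)

lemma path_cycle:
  assumes G: "G \<subseteq> R \<times> B" and RB: "R \<inter> B = {}" and e: "(u, v) \<in> G"
    and c: "conn (G - {(u, v)}) u v"
  shows "has_cycle G"
proof -
  let ?G' = "G - {(u, v)}"
  let ?r = "\<lambda>x y. adj ?G' x y"
  have "?r\<^sup>*\<^sup>* u v"
    using c rel_to_p by (simp add: conn_def)
  then obtain xs0 where "rtrancl_path ?r u xs0 v" by (auto simp: rtranclp_eq_rtrancl_path)
  then obtain xs where p: "rtrancl_path ?r u xs v" and d: "distinct (u # xs)"
    by (rule rtrancl_path_distinct)
  have uR: "u \<in> R" and vB: "v \<in> B" using e G by auto
  then have uv: "u \<noteq> v" using RB by auto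
  have "xs \<noteq> []" using p uv by (auto elim: rtrancl_path.cases)
  have "length xs \<ge> 2"
  proof (rule ccontr)
    assume "\<not> ?thesis"
    with \<open>xs \<noteq> []\<close> obtain w where xs: "xs = [w]" by (cases xs) (auto simp: Suc_le_eq)
    then have "w = v" using rtrancl_path_last[OF p] by simp
    have "?r u v" using rtrancl_path_nth[OF p, of 0] xs \<open>w = v\<close> by simp
    then have "(v, u) \<in> G" by (auto simp: adj_def)
    then show False using G RB uR by auto
  qed
  define vs where "vs = u # xs"
  have lv: "length vs = length xs + 1" by (simp add: vs_def)
  have lastv: "vs ! length xs = v"
    using rtrancl_path_last[OF p \<open>xs \<noteq> []\<close>] \<open>xs \<noteq> []\<close>
    by (simp add: vs_def last_conv_nth)
  show ?thesis
    unfolding has_cycle_def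
  proof (intro exI[of _ vs] conjI allI impI)
    show "3 \<le> length vs" using lv \<open>length xs \<ge> 2\<close> by simp
    show "distinct vs" using d by (simp add: vs_def)
    fix i assume i: "i < length vs"
    show "adj G (vs ! i) (vs ! ((i + 1) mod length vs))"
    proof (cases "i < length xs")
      case True
      then have "?r ((u # xs) ! i) (xs ! i)" by (rule rtrancl_path_nth[OF p])
      moreover have "(i + 1) mod length vs = i + 1" using True lv by simp
      ultimately show ?thesis using adj_mono[of ?G' G] by (auto simp: vs_def)
    next
      case False
      then have "i = length xs" using i lv by simp
      then have "(i + 1) mod length vs = 0" using lv by simp
      then show ?thesis using \<open>i = length xs\<close> lastv e by (simp add: adj_def vs_def)
    qed
  qed
qed

lemma adj_remove:
  assumes "adj G a b" "{a, b} \<noteq> {fst f, snd f}"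
  shows "adj (G - {f}) a b"
  using assms by (cases f) (auto simp: adj_def)

lemma cycle_split:
  assumes hc: "has_cycle G"
  shows "has_cycle (G - {f}) \<or> conn (G - {f}) (fst f) (snd f)"
proof -
  obtain vs where l3: "length vs \<ge> 3" and dv: "distinct vs"
    and ad: "\<And>i. i < length vs \<Longrightarrow> adj G (vs ! i) (vs ! ((i + 1) mod length vs))"
    using hc unfolding has_cycle_def by blast
  define n where "n = length vs"
  show ?thesis
  proof (cases "\<exists>i < n. {vs ! i, vs ! ((i + 1) mod n)} = {fst f, snd f}")
    case False
    then have "\<And>i. i < length vs \<Longrightarrow> adj (G - {f}) (vs ! i) (vs ! ((i + 1) mod length vs))"
      using ad adj_remove n_def by blast
    then have "has_cycle (G - {f})" unfolding has_cycle_def using l3 dv by blast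
    then show ?thesis by simp
  next
    case True
    then obtain i where i: "i < n" and ie: "{vs ! i, vs ! ((i + 1) mod n)} = {fst f, snd f}" by blast
    define ws where "ws = rotate (i + 1) vs"
    have lw: "length ws = n" by (simp add: ws_def n_def)
    have dw: "distinct ws" using dv by (simp add: ws_def)
    have wn: "ws ! j = vs ! ((i + 1 + j) mod n)" if "j < n" for j
      using that nth_rotate[of j vs "i+1"] by (simp add: ws_def n_def)
    have n0: "0 < n" unfolding n_def using l3 by linarith
    have w0: "ws ! 0 = vs ! ((i + 1) mod n)" using wn[OF n0] by simp
    have wl: "ws ! (n - 1) = vs ! i"
    proof -
      have "i + 1 + (n - 1) = i + n" using l3 n_def by simp
      then have "(i + 1 + (n - 1)) mod n = i" using i by simp
      moreover have "n - 1 < n" unfolding n_def using l3 by linarith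
      ultimately show ?thesis using wn[of "n - 1"] by simp
    qed
    have step: "adj (G - {f}) (ws ! j) (ws ! (j + 1))" if j: "j + 1 < n" for j
    proof -
      define k where "k = (i + 1 + j) mod n"
      have kn: "k < n" unfolding k_def using n0 by simp
      have "(k + 1) mod n = (i + 1 + (j + 1)) mod n"
        unfolding k_def by (simp add: mod_Suc_eq add.assoc)
      then have a: "adj G (ws ! j) (ws ! (j + 1))"
        using ad[of k] kn wn[of j] wn[of "j+1"] j n_def by (simp add: k_def)
      have ne: "{ws ! j, ws ! (j + 1)} \<noteq> {fst f, snd f}"
      proof
        assume eq: "{ws ! j, ws ! (j + 1)} = {fst f, snd f}"
        then have eq2: "{ws ! j, ws ! (j + 1)} = {ws ! (n - 1), ws ! 0}" using ie w0 wl by auto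
        have "ws ! j \<noteq> ws ! (n - 1)" using dw j lw by (simp add: nth_eq_iff_index_eq)
        then have "ws ! j = ws ! 0" using eq2 by auto
        then have "j = 0" using dw j lw by (simp add: nth_eq_iff_index_eq)
        then have "ws ! 1 = ws ! (n - 1)" using eq2 dw lw l3 
          by (auto simp: doubleton_eq_iff nth_eq_iff_index_eq)
        moreover have "1 < n" "n - 1 < n" "1 \<noteq> n - 1" unfolding n_def using l3 by linarith+
        ultimately show False using dw lw nth_eq_iff_index_eq by metis
      qed
      show ?thesis using adj_remove[OF a ne] .
    qed
    have "conn (G - {f}) (ws ! 0) (ws ! k)" if "k < n" for k
      using that
    proof (induction k)
      case 0 then show ?case by simp
    next
      case (Suc k)
      then have "conn (G - {f}) (ws ! k) (ws ! Suc k)" using step[of k] conn_edge by simp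
      then show ?case using Suc conn_trans by simp
    qed
    then have c: "conn (G - {f}) (ws ! 0) (ws ! (n - 1))" using l3 n_def by simp
    have "{ws ! 0, ws ! (n - 1)} = {fst f, snd f}" using ie w0 wl by auto
    then show ?thesis using c conn_sym by (auto simp: doubleton_eq_iff)
  qed
qed



lemma T1:
  assumes bst: "bichromatic_spanning_tree R B T" and e: "e \<in> T" and v: "v \<in> R \<union> B"
  shows "conn (T - {e}) (fst e) v \<or> conn (T - {e}) (snd e) v"
proof -
  have "fst e \<in> R" using bst e by (auto simp: bichromatic_spanning_tree_def)
  then have "conn T (fst e) v" using bst v
    by (auto simp: bichromatic_spanning_tree_def graph_connected_def conn_def)
  from conn_avoid_suffix[OF this, of e] show ?thesis by auto
qed

lemma T2:
  assumes bst: "bichromatic_spanning_tree R B T" and RB: "R \<inter> B = {}" and e: "e \<in> T"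
  shows "\<not> conn (T - {e}) (fst e) (snd e)"
proof
  assume c: "conn (T - {e}) (fst e) (snd e)"
  have "has_cycle T"
    using path_cycle[of T R B "fst e" "snd e"] bst RB e c
    by (auto simp: bichromatic_spanning_tree_def)
  then show False using bst by (simp add: bichromatic_spanning_tree_def)
qed

lemma excl:
  assumes bst: "bichromatic_spanning_tree R B T" and RB: "R \<inter> B = {}" and e: "e \<in> T"
  shows "\<not> (conn (T - {e}) (fst e) v \<and> conn (T - {e}) (snd e) v)"
  using T2[OF bst RB e] conn_sym conn_trans by blast

lemma same_side:
  assumes y: "y \<in> T" "y \<noteq> e"
  shows "conn (T - {e}) u (fst y) \<longleftrightarrow> conn (T - {e}) u (snd y)"
proof -
  have "adj (T - {e}) (fst y) (snd y)" using y by (auto simp: adj_def)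
  then have "conn (T - {e}) (fst y) (snd y)" by (rule conn_edge)
  then show ?thesis using conn_sym conn_trans by blast
qed

lemma tree_length_remove:
  assumes "finite T" "e \<in> T"
  shows "tree_length T = dist (fst e) (snd e) + tree_length (T - {e})"
  using sum.remove[OF assms, of "\<lambda>(r, b). dist r b"] by (cases e) (simp add: tree_length_def)

lemma CUT:
  assumes fin: "finite R" "finite B" and RB: "R \<inter> B = {}"
    and mst: "min_bichromatic_spanning_tree R B T"
    and e: "e \<in> T" and r': "r' \<in> R" and b': "b' \<in> B"
    and sd: "conn (T - {e}) (fst e) r' \<noteq> conn (T - {e}) (fst e) b'"
  shows "dist (fst e) (snd e) \<le> dist r' b'"
proof -
  have bst: "bichromatic_spanning_tree R B T" using mst by (simp add: min_bichromatic_spanning_tree_def)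
  have TRB: "T \<subseteq> R \<times> B" using bst by (simp add: bichromatic_spanning_tree_def)
  have finT: "finite T" using fin TRB finite_subset by blast
  let ?C = "conn (T - {e})"
  let ?r = "fst e" and ?b = "snd e"
  define f where "f = (r', b')"
  show ?thesis
  proof (cases "f \<in> T")
    case True
    show ?thesis
    proof (cases "f = e")
      case True then show ?thesis by (cases e) (auto simp: f_def)
    next
      case False
      then have "?C r' b'" using \<open>f \<in> T\<close> conn_edge[of "T - {e}" r' b'] by (auto simp: f_def adj_def)
      then show ?thesis using sd conn_sym conn_trans by blast
    qed
  next
    case False
    define T' where "T' = insert f (T - {e})"
    have cover: "?C ?r v \<or> ?C ?b v" if "v \<in> R \<union> B" for v using T1[OF bst e that] .
    have fadj: "conn T' r' b'" by (rule conn_edge) (simp add: T'_def f_def adj_def)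
    have sub: "T - {e} \<subseteq> T'" by (auto simp: T'_def)
    have rb: "conn T' ?r ?b"
    proof (cases "?C ?r r'")
      case True
      then have "\<not> ?C ?r b'" using sd by simp
      then have "?C ?b b'" using cover b' by blast
      then have "conn T' b' ?b" using conn_mono[OF sub] conn_sym by blast
      moreover have "conn T' ?r r'" using True conn_mono[OF sub] by blast
      ultimately show ?thesis using fadj conn_trans by blast
    next
      case False
      then have "?C ?r b'" using sd by simp
      have "?C ?b r'" using cover r' False by blast
      then have "conn T' r' ?b" using conn_mono[OF sub] conn_sym by blast
      moreover have "conn T' ?r b'" using \<open>?C ?r b'\<close> conn_mono[OF sub] by blast
      ultimately show ?thesis using fadj conn_sym conn_trans by blast
    qed
    have fromr: "conn T' ?r v" if "v \<in> R \<union> B" for v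
      using cover[OF that] conn_mono[OF sub] rb conn_trans by blast
    have gc: "graph_connected (R \<union> B) T'"
      unfolding graph_connected_def
      using fromr conn_sym conn_trans unfolding conn_def by blast
    have acyc: "\<not> has_cycle T'"
    proof
      assume "has_cycle T'"
      from cycle_split[OF this, of f]
      have "has_cycle (T' - {f}) \<or> conn (T' - {f}) (fst f) (snd f)" .
      moreover have "T' - {f} = T - {e}" using False by (auto simp: T'_def)
      ultimately have "has_cycle (T - {e}) \<or> ?C r' b'" by (simp add: f_def)
      then show False
      proof
        assume "has_cycle (T - {e})"
        then have "has_cycle T" using has_cycle_mono[of "T - {e}" T] by blast
        then show False using bst by (simp add: bichromatic_spanning_tree_def)
      next
        assume "?C r' b'"
        then show False using sd conn_sym conn_trans by blast
      qed
    qed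
    have "T' \<subseteq> R \<times> B" using TRB r' b' by (auto simp: T'_def f_def)
    then have "bichromatic_spanning_tree R B T'"
      using gc acyc by (simp add: bichromatic_spanning_tree_def)
    then have le: "tree_length T \<le> tree_length T'" using mst by (simp add: min_bichromatic_spanning_tree_def)
    have "tree_length T' = dist r' b' + tree_length (T - {e})"
      using tree_length_remove[of T' f] finT False by (simp add: T'_def f_def)
    moreover have "tree_length T = dist ?r ?b + tree_length (T - {e})"
      using tree_length_remove[OF finT e] .
    ultimately show ?thesis using le by linarith
  qed
qed

lemma TS:
  assumes bst: "bichromatic_spanning_tree R B T" and RB: "R \<inter> B = {}"
    and x: "x \<in> T" and y: "y \<in> T" and z: "z \<in> T" and d: "x \<noteq> y" "x \<noteq> z" "y \<noteq> z"
  shows "\<not> ((conn (T - {x}) (fst x) (fst y) \<noteq> conn (T - {x}) (fst x) (fst z)) \<and>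
             (conn (T - {y}) (fst y) (fst x) \<noteq> conn (T - {y}) (fst y) (fst z)))"
proof
  assume a: "(conn (T - {x}) (fst x) (fst y) \<noteq> conn (T - {x}) (fst x) (fst z)) \<and>
             (conn (T - {y}) (fst y) (fst x) \<noteq> conn (T - {y}) (fst y) (fst z))"
  have TRB: "T \<subseteq> R \<times> B" using bst by (simp add: bichromatic_spanning_tree_def)
  have zV: "fst z \<in> R \<union> B" using z TRB by auto
  have ssx: "conn (T - {y}) u (fst x) \<longleftrightarrow> conn (T - {y}) u (snd x)" for u
    using same_side[of x T y] x d(1) by blast
  obtain u where u: "u = fst y \<or> u = snd y" and uz: "conn (T - {y}) u (fst z)"
    and ux: "\<not> conn (T - {y}) u (fst x)"
  proof (cases "conn (T - {y}) (fst y) (fst z)")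
    case True
    then have "\<not> conn (T - {y}) (fst y) (fst x)" using a by simp
    then show ?thesis using that True by blast
  next
    case False
    then have "conn (T - {y}) (snd y) (fst z)" using T1[OF bst y zV] by blast
    moreover have "conn (T - {y}) (fst y) (fst x)" using a False by simp
    then have "\<not> conn (T - {y}) (snd y) (fst x)" using excl[OF bst RB y] by blast
    ultimately show ?thesis using that by blast
  qed
  have ux2: "\<not> conn (T - {y}) u (snd x)" using ux ssx by simp
  have sub: "T - {y} - {x} \<subseteq> T - {y}" "T - {y} - {x} \<subseteq> T - {x}" by auto
  from conn_avoid_prefix[OF uz, of x]
  have "conn (T - {y} - {x}) u (fst z)"
    using ux ux2 conn_mono[OF sub(1)] by blast
  then have c1: "conn (T - {x}) u (fst z)" using conn_mono[OF sub(2)] by blast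
  have "conn (T - {x}) (fst x) u \<longleftrightarrow> conn (T - {x}) (fst x) (fst y)"
    using u same_side[of y T x] y d(1) by auto
  moreover have "conn (T - {x}) (fst x) u \<longleftrightarrow> conn (T - {x}) (fst x) (fst z)"
    using c1 conn_sym conn_trans by blast
  ultimately show False using a by simp
qed



lemma strict_tri:
  fixes z r b p :: "'a::euclidean_space"
  assumes "p \<in> open_segment r b" "\<not> collinear {z, r, b}"
  shows "dist z b < dist z p + dist p b"
proof (rule ccontr)
  assume "\<not> ?thesis"
  then have "dist z b = dist z p + dist p b" using dist_triangle[of z b p] by linarith
  then have "between (z,b) p" by (simp add: between)
  then have c1: "collinear {z,p,b}" by (rule between_imp_collinear)
  have "p \<in> closed_segment r b" using assms(1) open_closed_segment by blast
  then have "between (r,b) p" by (simp add: between_mem_segment)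
  then have c2: "collinear {r,p,b}" by (rule between_imp_collinear)
  have pb: "p \<noteq> b" using assms(1) by (auto simp: open_segment_def)
  have "collinear {p,b,z,r}"
    using collinear_4_3[OF pb, of z r] c1 c2 by (simp add: insert_commute)
  then have "collinear {z,r,b}" by (rule collinear_subset) auto
  with assms(2) show False by simp
qed

lemma shared_end_collinear:
  fixes r b1 b2 x :: "'a::euclidean_space"
  assumes "x \<in> open_segment r b1" "x \<in> open_segment r b2"
  shows "collinear {r, b1, b2}"
proof -
  have "between (r,b1) x" "between (r,b2) x"
    using assms open_closed_segment by (auto simp: between_mem_segment)
  then have c1: "collinear {x,r,b1}" and c2: "collinear {x,r,b2}"
    by (auto dest!: between_imp_collinear simp: insert_commute)
  have xr: "x \<noteq> r" using assms(1) by (auto simp: open_segment_def)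
  have "collinear {x,r,b1,b2}" using collinear_4_3[OF xr] c1 c2 by simp
  then show ?thesis by (rule collinear_subset) auto
qed

lemma seg_split:
  fixes x y p :: "'a::euclidean_space"
  assumes "p \<in> open_segment x y"
  shows "dist x y = dist x p + dist p y"
  using assms open_closed_segment between between_mem_segment by blast

lemma seg_order:
  fixes x y p q :: "'a::euclidean_space"
  assumes "p \<in> closed_segment x y" "q \<in> closed_segment x y"
  shows "(dist x q = dist x p + dist p q \<and> dist p y = dist p q + dist q y) \<or>
         (dist x p = dist x q + dist q p \<and> dist q y = dist q p + dist p y)"
proof -
  obtain u where u: "0 \<le> u" "u \<le> 1" "p = x + u *\<^sub>R (y - x)"
    using assms(1) by (auto simp: closed_segment_def algebra_simps)
  obtain v where v: "0 \<le> v" "v \<le> 1" "q = x + v *\<^sub>R (y - x)"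
    using assms(2) by (auto simp: closed_segment_def algebra_simps)
  define n where "n = norm (y - x)"
  have d: "dist (x + s *\<^sub>R (y - x)) (x + t *\<^sub>R (y - x)) = \<bar>s - t\<bar> * n" for s t
  proof -
    have "(x + s *\<^sub>R (y - x)) - (x + t *\<^sub>R (y - x)) = (s - t) *\<^sub>R (y - x)"
      by (simp add: algebra_simps)
    then show ?thesis by (simp add: dist_norm n_def)
  qed
  have x0: "x = x + 0 *\<^sub>R (y - x)" and y1: "y = x + 1 *\<^sub>R (y - x)" by simp_all
  have dx: "dist x (x + s *\<^sub>R (y - x)) = \<bar>0 - s\<bar> * n" for s
    using d[of 0 s] by simp
  have dy: "dist (x + s *\<^sub>R (y - x)) y = \<bar>s - 1\<bar> * n" for s
    using d[of s 1] by simp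
  have "n \<ge> 0" by (simp add: n_def)
  have e1: "dist x p = u * n" using dx[of u] u by (simp add: u(3))
  have e2: "dist x q = v * n" using dx[of v] v by (simp add: v(3))
  have e3: "dist p y = (1 - u) * n" using dy[of u] u by (simp add: u(3))
  have e4: "dist q y = (1 - v) * n" using dy[of v] v by (simp add: v(3))
  have e5: "dist p q = \<bar>u - v\<bar> * n" using d[of u v] by (simp add: u(3) v(3))
  have e6: "dist q p = \<bar>u - v\<bar> * n" using e5 by (simp add: dist_commute)
  show ?thesis
  proof (cases "u \<le> v")
    case True
    then show ?thesis unfolding e1 e2 e3 e4 e5 e6 by (simp add: algebra_simps)
  next
    case False
    then show ?thesis unfolding e1 e2 e3 e4 e5 e6 by (simp add: algebra_simps)
  qed
qed

lemma G1:
  fixes r1 b1 r2 b2 x :: "'a::euclidean_space"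
  assumes "x \<in> open_segment r1 b1" "x \<in> open_segment r2 b2"
    "\<not> collinear {r1, r2, b2}" "\<not> collinear {r2, r1, b1}"
  shows "dist r1 b2 + dist r2 b1 < dist r1 b1 + dist r2 b2"
  using strict_tri[OF assms(2,3)] strict_tri[OF assms(1,4)]
    seg_split[OF assms(1)] seg_split[OF assms(2)] by linarith

lemma G2:
  fixes ra ba rb bb rc bc pab pbc pca :: "'a::euclidean_space"
  assumes ab: "pab \<in> open_segment ra ba" "pab \<in> open_segment rb bb"
    and bc: "pbc \<in> open_segment rb bb" "pbc \<in> open_segment rc bc"
    and ca: "pca \<in> open_segment rc bc" "pca \<in> open_segment ra ba"
    and n1: "\<not> collinear {ra, rb, bb}" and n2: "\<not> collinear {rb, rc, bc}"
    and n3: "\<not> collinear {rc, ra, ba}"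
  shows "dist ra bb + dist rb bc + dist rc ba < dist ra ba + dist rb bb + dist rc bc"
proof -
  note os = open_closed_segment
  have sa: "dist ra ba = dist ra pab + dist pab ba" "dist ra ba = dist ra pca + dist pca ba"
    using seg_split ab ca by blast+
  have sb: "dist rb bb = dist rb pab + dist pab bb" "dist rb bb = dist rb pbc + dist pbc bb"
    using seg_split ab bc by blast+
  have sc: "dist rc bc = dist rc pbc + dist pbc bc" "dist rc bc = dist rc pca + dist pca bc"
    using seg_split bc ca by blast+
  have oa: "(dist ra pca = dist ra pab + dist pab pca \<and> dist pab ba = dist pab pca + dist pca ba) \<or>
         (dist ra pab = dist ra pca + dist pca pab \<and> dist pca ba = dist pca pab + dist pab ba)"
    using seg_order[of pab ra ba pca] ab ca os by blast
  have ob: "(dist rb pbc = dist rb pab + dist pab pbc \<and> dist pab bb = dist pab pbc + dist pbc bb) \<or>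
         (dist rb pab = dist rb pbc + dist pbc pab \<and> dist pbc bb = dist pbc pab + dist pab bb)"
    using seg_order[of pab rb bb pbc] ab bc os by blast
  have oc: "(dist rc pca = dist rc pbc + dist pbc pca \<and> dist pbc bc = dist pbc pca + dist pca bc) \<or>
         (dist rc pbc = dist rc pca + dist pca pbc \<and> dist pca bc = dist pca pbc + dist pbc bc)"
    using seg_order[of pbc rc bc pca] bc ca os by blast
  have cm: "dist pab pbc = dist pbc pab" "dist pbc pca = dist pca pbc" "dist pab pca = dist pca pab"
    by (simp_all add: dist_commute)
  have t1: "dist ra bb < dist ra pab + dist pab bb" "dist ra bb < dist ra pbc + dist pbc bb"
    using strict_tri[OF ab(2) n1] strict_tri[OF bc(1) n1] by auto
  have t2: "dist rb bc < dist rb pbc + dist pbc bc" "dist rb bc < dist rb pca + dist pca bc"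
    using strict_tri[OF bc(2) n2] strict_tri[OF ca(1) n2] by auto
  have t3: "dist rc ba < dist rc pca + dist pca ba" "dist rc ba < dist rc pab + dist pab ba"
    using strict_tri[OF ca(2) n3] strict_tri[OF ab(1) n3] by auto
  have u1: "dist ra pbc \<le> dist ra pca + dist pca pbc" "dist ra pbc \<le> dist ra pab + dist pab pbc"
    by (rule dist_triangle)+
  have u2: "dist rb pca \<le> dist rb pab + dist pab pca" "dist rb pca \<le> dist rb pbc + dist pbc pca"
    by (rule dist_triangle)+
  have u3: "dist rc pab \<le> dist rc pbc + dist pbc pab" "dist rc pab \<le> dist rc pca + dist pca pab"
    by (rule dist_triangle)+
  from oa ob oc show ?thesis
    using sa sb sc cm t1 t2 t3 u1 u2 u3 by linarith
qed



lemma gp_nc: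
  assumes "general_position S" "a \<in> S" "b \<in> S" "c \<in> S" "a \<noteq> b" "a \<noteq> c" "b \<noteq> c"
  shows "\<not> collinear {a, b, c}"
  using assms by (auto simp: general_position_def)

theorem theorem4:
  fixes R B :: "point set" and T :: "(point \<times> point) set"
  assumes "finite R" and "finite B" and "R \<inter> B = {}"
    and "R \<noteq> {}" and "B \<noteq> {}"
    and "general_position (R \<union> B)"
    and "min_bichromatic_spanning_tree R B T"
  shows "quasi_plane T"
  unfolding quasi_plane_def
proof
  assume "\<exists>e1\<in>T. \<exists>e2\<in>T. \<exists>e3\<in>T. e1 \<noteq> e2 \<and> e1 \<noteq> e3 \<and> e2 \<noteq> e3 \<and>
      edges_cross e1 e2 \<and> edges_cross e1 e3 \<and> edges_cross e2 e3"
  then obtain e1 e2 e3 where e1T: "e1 \<in> T" and e2T: "e2 \<in> T" and e3T: "e3 \<in> T"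
    and d12: "e1 \<noteq> e2" and d13: "e1 \<noteq> e3" and d23: "e2 \<noteq> e3"
    and x12: "edges_cross e1 e2" and x13: "edges_cross e1 e3" and x23: "edges_cross e2 e3"
    by blast
  have dne: "e1 \<noteq> e2" "e1 \<noteq> e3" "e2 \<noteq> e3" "e2 \<noteq> e1" "e3 \<noteq> e1" "e3 \<noteq> e2"
    using d12 d13 d23 by auto
  have bst: "bichromatic_spanning_tree R B T"
    using assms(7) by (simp add: min_bichromatic_spanning_tree_def)
  have TRB: "T \<subseteq> R \<times> B" using bst by (simp add: bichromatic_spanning_tree_def)
  define ra where "ra = fst e1"
  define ba where "ba = snd e1"
  define rb where "rb = fst e2"
  define bb where "bb = snd e2"
  define rc where "rc = fst e3"
  define bc where "bc = snd e3"
  have f1: "fst e1 = ra" "snd e1 = ba" and f2: "fst e2 = rb" "snd e2 = bb"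
    and f3: "fst e3 = rc" "snd e3 = bc" by (simp_all add: ra_def ba_def rb_def bb_def rc_def bc_def)
  have mem: "ra \<in> R" "rb \<in> R" "rc \<in> R" "ba \<in> B" "bb \<in> B" "bc \<in> B"
    using TRB e1T e2T e3T by (auto simp: ra_def ba_def rb_def bb_def rc_def bc_def)
  have pe1: "e1 = (ra, ba)" and pe2: "e2 = (rb, bb)" and pe3: "e3 = (rc, bc)"
    by (simp_all add: ra_def ba_def rb_def bb_def rc_def bc_def)
  have gp: "general_position (R \<union> B)" by (rule assms(6))
  have rbd: "r \<noteq> b" if "r \<in> R" "b \<in> B" for r b using that assms(3) by auto
  have redne: "r1 \<noteq> r2" if h: "edges_cross (r1, b1) (r2, b2)" "r1 \<in> R" "r2 \<in> R" "b1 \<in> B" "b2 \<in> B"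
      "(r1, b1) \<noteq> (r2, b2)" for r1 r2 b1 b2
  proof
    assume eq: "r1 = r2"
    then have "b1 \<noteq> b2" using h(6) by auto
    obtain x where "x \<in> open_segment r1 b1" "x \<in> open_segment r1 b2"
      using h(1) by (auto simp: edges_cross_def eq)
    then have "collinear {r1, b1, b2}" by (rule shared_end_collinear)
    moreover have "\<not> collinear {r1, b1, b2}"
      using gp_nc[OF gp, of r1 b1 b2] h(2,4,5) rbd \<open>b1 \<noteq> b2\<close> by blast
    ultimately show False by simp
  qed
  have bluene: "b1 \<noteq> b2" if h: "edges_cross (r1, b1) (r2, b2)" "r1 \<in> R" "r2 \<in> R" "b1 \<in> B" "b2 \<in> B"
      "(r1, b1) \<noteq> (r2, b2)" for r1 r2 b1 b2
  proof
    assume eq: "b1 = b2"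
    then have "r1 \<noteq> r2" using h(6) by auto
    obtain x where "x \<in> open_segment b1 r1" "x \<in> open_segment b1 r2"
      using h(1) by (auto simp: edges_cross_def open_segment_commute eq)
    then have "collinear {b1, r1, r2}" by (rule shared_end_collinear)
    moreover have "\<not> collinear {b1, r1, r2}"
      using gp_nc[OF gp, of b1 r1 r2] h(2,3,4) rbd \<open>r1 \<noteq> r2\<close> by blast
    ultimately show False by simp
  qed
  have x12': "edges_cross (ra, ba) (rb, bb)" using x12 pe1 pe2 by simp
  have x13': "edges_cross (ra, ba) (rc, bc)" using x13 pe1 pe3 by simp
  have x23': "edges_cross (rb, bb) (rc, bc)" using x23 pe2 pe3 by simp
  have d12': "(ra, ba) \<noteq> (rb, bb)" using d12 pe1 pe2 by simp
  have d13': "(ra, ba) \<noteq> (rc, bc)" using d13 pe1 pe3 by simp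
  have d23': "(rb, bb) \<noteq> (rc, bc)" using d23 pe2 pe3 by simp
  have dist6: "ra \<noteq> rb" "ra \<noteq> rc" "rb \<noteq> rc" "ba \<noteq> bb" "ba \<noteq> bc" "bb \<noteq> bc"
    using redne[OF x12' mem(1,2,4,5) d12'] redne[OF x13' mem(1,3,4,6) d13'] redne[OF x23' mem(2,3,5,6) d23']
      bluene[OF x12' mem(1,2,4,5) d12'] bluene[OF x13' mem(1,3,4,6) d13'] bluene[OF x23' mem(2,3,5,6) d23']
    by auto
  have nc: "\<And>x y z. x \<in> R \<union> B \<Longrightarrow> y \<in> R \<union> B \<Longrightarrow> z \<in> R \<union> B \<Longrightarrow> x \<noteq> y \<Longrightarrow> x \<noteq> z \<Longrightarrow> y \<noteq> z
     \<Longrightarrow> \<not> collinear {x, y, z}"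
    using gp_nc[OF gp] by blast
  have rbs: "ra \<noteq> ba" "ra \<noteq> bb" "ra \<noteq> bc" "rb \<noteq> ba" "rb \<noteq> bb" "rb \<noteq> bc" "rc \<noteq> ba" "rc \<noteq> bb" "rc \<noteq> bc"
    using rbd mem by auto
  have n_ab: "\<not> collinear {ra, rb, bb}" and n_ba: "\<not> collinear {rb, ra, ba}"
    and n_ac: "\<not> collinear {ra, rc, bc}" and n_ca: "\<not> collinear {rc, ra, ba}"
    and n_bc: "\<not> collinear {rb, rc, bc}" and n_cb: "\<not> collinear {rc, rb, bb}"
    using nc[of ra rb bb] nc[of rb ra ba] nc[of ra rc bc] nc[of rc ra ba] nc[of rb rc bc] nc[of rc rb bb]
      mem dist6 rbs by auto
  obtain pab where pab: "pab \<in> open_segment ra ba" "pab \<in> open_segment rb bb"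
    using x12 by (auto simp: edges_cross_def pe1 pe2)
  obtain pca where pca: "pca \<in> open_segment ra ba" "pca \<in> open_segment rc bc"
    using x13 by (auto simp: edges_cross_def pe1 pe3)
  obtain pbc where pbc: "pbc \<in> open_segment rb bb" "pbc \<in> open_segment rc bc"
    using x23 by (auto simp: edges_cross_def pe2 pe3)
  have g1: "dist ra bb + dist rb ba < dist ra ba + dist rb bb"
    by (rule G1[OF pab n_ab n_ba])
  have g2: "dist ra bc + dist rc ba < dist ra ba + dist rc bc"
    by (rule G1[OF pca n_ac n_ca])
  have g3: "dist rb bc + dist rc bb < dist rb bb + dist rc bc"
    by (rule G1[OF pbc n_bc n_cb])
  have g4: "dist ra bb + dist rb bc + dist rc ba < dist ra ba + dist rb bb + dist rc bc"
    by (rule G2[OF pab pbc pca(2) pca(1) n_ab n_bc n_ca])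
  have g5: "dist ra bc + dist rc bb + dist rb ba < dist ra ba + dist rc bc + dist rb bb"
    by (rule G2[OF pca(1) pca(2) pbc(2) pbc(1) pab(2) pab(1) n_ac n_cb n_ba])
  have cut: "\<And>e r' b'. e \<in> T \<Longrightarrow> r' \<in> R \<Longrightarrow> b' \<in> B \<Longrightarrow> conn (T - {e}) (fst e) r' \<noteq> conn (T - {e}) (fst e) b' \<Longrightarrow> dist (fst e) (snd e) \<le> dist r' b'"
    using CUT[OF assms(1,2,3,7)] by blast
  have c1: "conn (T - {e1}) ra ra \<noteq> conn (T - {e1}) ra ba \<longrightarrow> dist ra ba \<le> dist ra ba"
    using cut[of e1 ra ba] e1T mem by (simp add: f1)
  have c2: "conn (T - {e1}) ra ra \<noteq> conn (T - {e1}) ra bb \<longrightarrow> dist ra ba \<le> dist ra bb"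
    using cut[of e1 ra bb] e1T mem by (simp add: f1)
  have c3: "conn (T - {e1}) ra ra \<noteq> conn (T - {e1}) ra bc \<longrightarrow> dist ra ba \<le> dist ra bc"
    using cut[of e1 ra bc] e1T mem by (simp add: f1)
  have c4: "conn (T - {e1}) ra rb \<noteq> conn (T - {e1}) ra ba \<longrightarrow> dist ra ba \<le> dist rb ba"
    using cut[of e1 rb ba] e1T mem by (simp add: f1)
  have c5: "conn (T - {e1}) ra rb \<noteq> conn (T - {e1}) ra bb \<longrightarrow> dist ra ba \<le> dist rb bb"
    using cut[of e1 rb bb] e1T mem by (simp add: f1)
  have c6: "conn (T - {e1}) ra rb \<noteq> conn (T - {e1}) ra bc \<longrightarrow> dist ra ba \<le> dist rb bc"
    using cut[of e1 rb bc] e1T mem by (simp add: f1)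
  have c7: "conn (T - {e1}) ra rc \<noteq> conn (T - {e1}) ra ba \<longrightarrow> dist ra ba \<le> dist rc ba"
    using cut[of e1 rc ba] e1T mem by (simp add: f1)
  have c8: "conn (T - {e1}) ra rc \<noteq> conn (T - {e1}) ra bb \<longrightarrow> dist ra ba \<le> dist rc bb"
    using cut[of e1 rc bb] e1T mem by (simp add: f1)
  have c9: "conn (T - {e1}) ra rc \<noteq> conn (T - {e1}) ra bc \<longrightarrow> dist ra ba \<le> dist rc bc"
    using cut[of e1 rc bc] e1T mem by (simp add: f1)
  have c10: "conn (T - {e2}) rb ra \<noteq> conn (T - {e2}) rb ba \<longrightarrow> dist rb bb \<le> dist ra ba"
    using cut[of e2 ra ba] e2T mem by (simp add: f2)
  have c11: "conn (T - {e2}) rb ra \<noteq> conn (T - {e2}) rb bb \<longrightarrow> dist rb bb \<le> dist ra bb"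
    using cut[of e2 ra bb] e2T mem by (simp add: f2)
  have c12: "conn (T - {e2}) rb ra \<noteq> conn (T - {e2}) rb bc \<longrightarrow> dist rb bb \<le> dist ra bc"
    using cut[of e2 ra bc] e2T mem by (simp add: f2)
  have c13: "conn (T - {e2}) rb rb \<noteq> conn (T - {e2}) rb ba \<longrightarrow> dist rb bb \<le> dist rb ba"
    using cut[of e2 rb ba] e2T mem by (simp add: f2)
  have c14: "conn (T - {e2}) rb rb \<noteq> conn (T - {e2}) rb bb \<longrightarrow> dist rb bb \<le> dist rb bb"
    using cut[of e2 rb bb] e2T mem by (simp add: f2)
  have c15: "conn (T - {e2}) rb rb \<noteq> conn (T - {e2}) rb bc \<longrightarrow> dist rb bb \<le> dist rb bc"
    using cut[of e2 rb bc] e2T mem by (simp add: f2)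
  have c16: "conn (T - {e2}) rb rc \<noteq> conn (T - {e2}) rb ba \<longrightarrow> dist rb bb \<le> dist rc ba"
    using cut[of e2 rc ba] e2T mem by (simp add: f2)
  have c17: "conn (T - {e2}) rb rc \<noteq> conn (T - {e2}) rb bb \<longrightarrow> dist rb bb \<le> dist rc bb"
    using cut[of e2 rc bb] e2T mem by (simp add: f2)
  have c18: "conn (T - {e2}) rb rc \<noteq> conn (T - {e2}) rb bc \<longrightarrow> dist rb bb \<le> dist rc bc"
    using cut[of e2 rc bc] e2T mem by (simp add: f2)
  have c19: "conn (T - {e3}) rc ra \<noteq> conn (T - {e3}) rc ba \<longrightarrow> dist rc bc \<le> dist ra ba"
    using cut[of e3 ra ba] e3T mem by (simp add: f3)
  have c20: "conn (T - {e3}) rc ra \<noteq> conn (T - {e3}) rc bb \<longrightarrow> dist rc bc \<le> dist ra bb"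
    using cut[of e3 ra bb] e3T mem by (simp add: f3)
  have c21: "conn (T - {e3}) rc ra \<noteq> conn (T - {e3}) rc bc \<longrightarrow> dist rc bc \<le> dist ra bc"
    using cut[of e3 ra bc] e3T mem by (simp add: f3)
  have c22: "conn (T - {e3}) rc rb \<noteq> conn (T - {e3}) rc ba \<longrightarrow> dist rc bc \<le> dist rb ba"
    using cut[of e3 rb ba] e3T mem by (simp add: f3)
  have c23: "conn (T - {e3}) rc rb \<noteq> conn (T - {e3}) rc bb \<longrightarrow> dist rc bc \<le> dist rb bb"
    using cut[of e3 rb bb] e3T mem by (simp add: f3)
  have c24: "conn (T - {e3}) rc rb \<noteq> conn (T - {e3}) rc bc \<longrightarrow> dist rc bc \<le> dist rb bc"
    using cut[of e3 rb bc] e3T mem by (simp add: f3)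
  have c25: "conn (T - {e3}) rc rc \<noteq> conn (T - {e3}) rc ba \<longrightarrow> dist rc bc \<le> dist rc ba"
    using cut[of e3 rc ba] e3T mem by (simp add: f3)
  have c26: "conn (T - {e3}) rc rc \<noteq> conn (T - {e3}) rc bb \<longrightarrow> dist rc bc \<le> dist rc bb"
    using cut[of e3 rc bb] e3T mem by (simp add: f3)
  have c27: "conn (T - {e3}) rc rc \<noteq> conn (T - {e3}) rc bc \<longrightarrow> dist rc bc \<le> dist rc bc"
    using cut[of e3 rc bc] e3T mem by (simp add: f3)
  have sB1: "\<not> conn (T - {e1}) ra ba" using T2[OF bst assms(3) e1T] by (simp add: f1)
  have ss12: "conn (T - {e1}) ra rb \<longleftrightarrow> conn (T - {e1}) ra bb" using same_side[of e2 T e1 ra] e2T dne by (simp add: f2)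
  have ss13: "conn (T - {e1}) ra rc \<longleftrightarrow> conn (T - {e1}) ra bc" using same_side[of e3 T e1 ra] e3T dne by (simp add: f3)
  have sB2: "\<not> conn (T - {e2}) rb bb" using T2[OF bst assms(3) e2T] by (simp add: f2)
  have ss21: "conn (T - {e2}) rb ra \<longleftrightarrow> conn (T - {e2}) rb ba" using same_side[of e1 T e2 rb] e1T dne by (simp add: f1)
  have ss23: "conn (T - {e2}) rb rc \<longleftrightarrow> conn (T - {e2}) rb bc" using same_side[of e3 T e2 rb] e3T dne by (simp add: f3)
  have sB3: "\<not> conn (T - {e3}) rc bc" using T2[OF bst assms(3) e3T] by (simp add: f3)
  have ss31: "conn (T - {e3}) rc ra \<longleftrightarrow> conn (T - {e3}) rc ba" using same_side[of e1 T e3 rc] e1T dne by (simp add: f1)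
  have ss32: "conn (T - {e3}) rc rb \<longleftrightarrow> conn (T - {e3}) rc bb" using same_side[of e2 T e3 rc] e2T dne by (simp add: f2)
  have ts123: "\<not> ((conn (T - {e1}) ra rb \<noteq> conn (T - {e1}) ra rc) \<and> (conn (T - {e2}) rb ra \<noteq> conn (T - {e2}) rb rc))"
    using TS[OF bst assms(3) e1T e2T e3T] dne by (simp add: f1 f2 f3)
  have ts132: "\<not> ((conn (T - {e1}) ra rc \<noteq> conn (T - {e1}) ra rb) \<and> (conn (T - {e3}) rc ra \<noteq> conn (T - {e3}) rc rb))"
    using TS[OF bst assms(3) e1T e3T e2T] dne by (simp add: f1 f2 f3)
  have ts213: "\<not> ((conn (T - {e2}) rb ra \<noteq> conn (T - {e2}) rb rc) \<and> (conn (T - {e1}) ra rb \<noteq> conn (T - {e1}) ra rc))"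
    using TS[OF bst assms(3) e2T e1T e3T] dne by (simp add: f1 f2 f3)
  have ts231: "\<not> ((conn (T - {e2}) rb rc \<noteq> conn (T - {e2}) rb ra) \<and> (conn (T - {e3}) rc rb \<noteq> conn (T - {e3}) rc ra))"
    using TS[OF bst assms(3) e2T e3T e1T] dne by (simp add: f1 f2 f3)
  have ts312: "\<not> ((conn (T - {e3}) rc ra \<noteq> conn (T - {e3}) rc rb) \<and> (conn (T - {e1}) ra rc \<noteq> conn (T - {e1}) ra rb))"
    using TS[OF bst assms(3) e3T e1T e2T] dne by (simp add: f1 f2 f3)
  have ts321: "\<not> ((conn (T - {e3}) rc rb \<noteq> conn (T - {e3}) rc ra) \<and> (conn (T - {e2}) rb rc \<noteq> conn (T - {e2}) rb ra))"
    using TS[OF bst assms(3) e3T e2T e1T] dne by (simp add: f1 f2 f3)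
  show False using c1 c2 c3 c4 c5 c6 c7 c8 c9 c10 c11 c12 c13 c14 c15 c16 c17 c18 c19 c20 c21 c22 c23 c24 c25 c26 c27 sB1 sB2 sB3 ss12 ss13 ss21 ss23 ss31 ss32 ts123 ts132 ts213 ts231 ts312 ts321 g1 g2 g3 g4 g5 conn_refl[of "T - {e1}" ra] conn_refl[of "T - {e2}" rb] conn_refl[of "T - {e3}" rc] by argo
qed


end
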